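(* In the multi-sender unicast index-coding instance with $N=4$ messages, $K=15$ senders whose message sets are all $15$ nonempty subsets of $\{1,2,3,4\}$, each with link capacity $1$, and side information $\mathcal A_1=\{4\}$, $\mathcal A_2=\{3,4\}$, $\mathcal A_3=\{1,2\}$, $\mathcal A_4=\{2,3\}$, every achievable rate tuple satisfies $R_1+R_2+R_3\le 18$.
   Context: Model. $N$ independent messages $M_1,\dots,M_N$, $M_j$ uniform on $[1:2^{nR_j}]$ ($n$ the block length). Sender $k$ knows the messages $M_i$, $i\in\mathcal S_k$, and sends an index $L_k=f_k((M_i)_{i\in\mathcal S_k})\in[1:2^{nC_k})=\{1,\dots,2^{\lfloor nC_k\rfloor}\}$ over a noiseless broadcast link reaching all receivers. Receiver $j$ knows $M_i$, $i\in\mathcal A_j$, and must output an estimate $\hat M_j=g_j(L_1,\dots,L_K,(M_i)_{i\in\mathcal A_j})$ of $M_j$. A rate tuple is achievable if there exist such codes with $\Pr[(\hat M_1,\dots,\hat M_N)\ne(M_1,\dots,M_N)]\to0$ as $n\to\infty$. *)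

theory Defs
  imports Complex_Main "HOL-Library.FuncSet"
begin

text \<open>Messages are indexed by 1..N, senders by 1..K.
  Sender k knows the messages in S k and has link capacity C k; receiver j knows the
  messages in A j and wants message j.\<close>

definition msg_tuples :: "nat \<Rightarrow> (nat \<Rightarrow> real) \<Rightarrow> nat \<Rightarrow> (nat \<Rightarrow> nat) set" where
  "msg_tuples N R n = PiE {1..N} (\<lambda>j. {1..nat \<lceil>2 powr (real n * R j)\<rceil>})"

text \<open>A code of block length n: encoders f k and decoders g j, with the required
  information constraints and index ranges [1:2^(n C_k)) = {1,...,2^floor(n C_k)}.\<close>

definition valid_code ::
  "nat \<Rightarrow> nat \<Rightarrow> (nat \<Rightarrow> nat set) \<Rightarrow> (nat \<Rightarrow> real) \<Rightarrow> (nat \<Rightarrow> nat set) \<Rightarrow>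
   (nat \<Rightarrow> real) \<Rightarrow> nat \<Rightarrow>
   (nat \<Rightarrow> (nat \<Rightarrow> nat) \<Rightarrow> nat) \<Rightarrow> (nat \<Rightarrow> (nat \<Rightarrow> nat) \<Rightarrow> (nat \<Rightarrow> nat) \<Rightarrow> nat) \<Rightarrow> bool" where
  "valid_code N K S C A R n f g \<longleftrightarrow>
     (\<forall>k\<in>{1..K}. \<forall>m\<in>msg_tuples N R n. f k m \<in> {1..2 ^ nat \<lfloor>real n * C k\<rfloor>}) \<and>
     (\<forall>k\<in>{1..K}. \<forall>m\<in>msg_tuples N R n. \<forall>m'\<in>msg_tuples N R n.
        (\<forall>i\<in>S k. m i = m' i) \<longrightarrow> f k m = f k m') \<and>
     (\<forall>j\<in>{1..N}. \<forall>L. \<forall>m\<in>msg_tuples N R n. \<forall>m'\<in>msg_tuples N R n.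
        (\<forall>i\<in>A j. m i = m' i) \<longrightarrow> g j L m = g j L m')"

text \<open>The broadcast indices seen by every receiver (only the K senders' indices).\<close>
definition sent :: "nat \<Rightarrow> (nat \<Rightarrow> (nat \<Rightarrow> nat) \<Rightarrow> nat) \<Rightarrow> (nat \<Rightarrow> nat) \<Rightarrow> nat \<Rightarrow> nat" where
  "sent K f m = (\<lambda>k. if k \<in> {1..K} then f k m else 0)"

text \<open>Error probability under independent uniform messages (counting measure).\<close>
definition err_prob ::
  "nat \<Rightarrow> nat \<Rightarrow> (nat \<Rightarrow> real) \<Rightarrow> nat \<Rightarrow>
   (nat \<Rightarrow> (nat \<Rightarrow> nat) \<Rightarrow> nat) \<Rightarrow> (nat \<Rightarrow> (nat \<Rightarrow> nat) \<Rightarrow> (nat \<Rightarrow> nat) \<Rightarrow> nat) \<Rightarrow> real" where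
  "err_prob N K R n f g =
     real (card {m \<in> msg_tuples N R n. \<exists>j\<in>{1..N}. g j (sent K f m) m \<noteq> m j})
     / real (card (msg_tuples N R n))"

definition achievable ::
  "nat \<Rightarrow> nat \<Rightarrow> (nat \<Rightarrow> nat set) \<Rightarrow> (nat \<Rightarrow> real) \<Rightarrow> (nat \<Rightarrow> nat set) \<Rightarrow> (nat \<Rightarrow> real) \<Rightarrow> bool" where
  "achievable N K S C A R \<longleftrightarrow>
     (\<exists>f g. (\<forall>n. valid_code N K S C A R n (f n) (g n)) \<and>
            (\<lambda>n. err_prob N K R n (f n) (g n)) \<longlonglongrightarrow> 0)"

end

theory Submission
  imports Defs
begin


lemma fiber_count:
  fixes h :: "'x \<Rightarrow> 'w" and c :: nat
  assumes "finite D"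
  shows "card {w. c < card {x\<in>D. h x = w}} * c \<le> card D"
proof -
  let ?B = "{w. c < card {x\<in>D. h x = w}}"
  have sub: "?B \<subseteq> h ` D"
  proof
    fix w assume "w \<in> ?B"
    then have "{x\<in>D. h x = w} \<noteq> {}" by (cases "{x\<in>D. h x = w} = {}") auto
    then show "w \<in> h ` D" by auto
  qed
  have finB: "finite ?B" using sub assms finite_subset by blast
  have "card ?B * c = (\<Sum>w\<in>?B. c)" by simp
  also have "\<dots> \<le> (\<Sum>w\<in>?B. card {x\<in>D. h x = w})"
    by (rule sum_mono) auto
  also have "\<dots> = card (\<Union>w\<in>?B. {x\<in>D. h x = w})"
    by (rule card_UN_disjoint[symmetric]) (use finB assms in auto)
  also have "\<dots> \<le> card D"
    by (rule card_mono) (use assms in auto)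
  finally show ?thesis .
qed

lemma small_count:
  fixes G :: "'m set" and Y :: "'m \<Rightarrow> 'y" and p :: "'m \<Rightarrow> 'x" and F :: "'m \<Rightarrow> 'x set"
    and c :: nat
  assumes "finite G" "\<And>m. m\<in>G \<Longrightarrow> finite (F m) \<and> card (F m) \<le> c"
    "\<And>m m'. m\<in>G \<Longrightarrow> m'\<in>G \<Longrightarrow> Y m = Y m' \<Longrightarrow> p m' \<in> F m"
    "\<And>m m'. m\<in>G \<Longrightarrow> m'\<in>G \<Longrightarrow> Y m = Y m' \<Longrightarrow> p m = p m' \<Longrightarrow> m = m'"
  shows "card G \<le> c * card (Y ` G)"
proof -
  have eq: "G = (\<Union>y\<in>Y ` G. {m\<in>G. Y m = y})" by auto
  have each: "card {m\<in>G. Y m = y} \<le> c" if yG: "y \<in> Y ` G" for y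
  proof -
    obtain m0 where m0: "m0 \<in> G" "Y m0 = y" using yG by blast
    have "inj_on p {m\<in>G. Y m = y}"
      by (rule inj_onI) (use assms(4) in auto)
    moreover have "p ` {m\<in>G. Y m = y} \<subseteq> F m0" using assms(3) m0 by auto
    ultimately have "card {m\<in>G. Y m = y} \<le> card (F m0)"
      using assms(2)[OF m0(1)] by (meson card_inj_on_le)
    then show ?thesis using assms(2)[OF m0(1)] by linarith
  qed
  have "card G \<le> (\<Sum>y\<in>Y ` G. card {m\<in>G. Y m = y})"
    by (subst eq) (rule card_UN_le, use assms(1) in auto)
  also have "\<dots> \<le> (\<Sum>y\<in>Y ` G. c)" by (rule sum_mono) (use each in auto)
  also have "\<dots> = c * card (Y ` G)" by simp
  finally show ?thesis .
qed

lemma large_count: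
  fixes I :: "nat set" and D :: "nat \<Rightarrow> 'b set" and W :: "(nat \<Rightarrow> 'b) \<Rightarrow> 'w"
    and V :: "(nat \<Rightarrow> 'b) \<Rightarrow> 'v" and c :: nat
  assumes fin: "finite I" "\<And>j. finite (D j)" and iI: "i \<in> I"
    and VS: "finite VS" "\<And>m. m \<in> L \<Longrightarrow> V m \<in> VS"
    and LM: "L \<subseteq> PiE I D"
    and inj: "\<And>m m'. m\<in>L \<Longrightarrow> m'\<in>L \<Longrightarrow> (\<forall>j\<in>I-{i}. m j = m' j) \<Longrightarrow> W m = W m' \<Longrightarrow> V m = V m' \<Longrightarrow> m = m'"
    and big: "\<And>m. m\<in>L \<Longrightarrow> c < card {x\<in>D i. W (m(i:=x)) = W m}"
  shows "card L * c \<le> card VS * card (PiE I D)"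
proof -
  define BW where "BW r = {w. c < card {x\<in>D i. W (r(i:=x)) = w}}" for r :: "nat \<Rightarrow> 'b"
  define \<phi> where "\<phi> m = (restrict m (I-{i}), (W m, V m))" for m
  have upd: "(restrict m (I-{i}))(i:=x) = m(i:=x)" if "m \<in> PiE I D" for m x
  proof
    fix j show "((restrict m (I-{i}))(i:=x)) j = (m(i:=x)) j"
      using that by (cases "j \<in> I") (auto simp: PiE_def extensional_def)
  qed
  have injp: "inj_on \<phi> L"
  proof (rule inj_onI)
    fix m m' assume "m \<in> L" "m' \<in> L" "\<phi> m = \<phi> m'"
    then show "m = m'" using inj[of m m'] unfolding \<phi>_def
      by (metis prod.inject restrict_apply')
  qed
  have img: "\<phi> ` L \<subseteq> Sigma (PiE (I-{i}) D) (\<lambda>r. BW r \<times> VS)"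
  proof
    fix z assume "z \<in> \<phi> ` L"
    then obtain m where m: "m \<in> L" "z = \<phi> m" by auto
    have mM: "m \<in> PiE I D" using m LM by auto
    have "restrict m (I-{i}) \<in> PiE (I-{i}) D" using mM by auto
    moreover have "W m \<in> BW (restrict m (I-{i}))"
      using big[OF m(1)] upd[OF mM] by (simp add: BW_def)
    moreover have "V m \<in> VS" using VS m by auto
    ultimately show "z \<in> Sigma (PiE (I-{i}) D) (\<lambda>r. BW r \<times> VS)" using m by (simp add: \<phi>_def)
  qed
  have finBW: "finite (BW r)" for r
  proof -
    have "BW r \<subseteq> (\<lambda>x. W (r(i:=x))) ` D i"
    proof
      fix w assume "w \<in> BW r"
      then have "{x\<in>D i. W (r(i:=x)) = w} \<noteq> {}" unfolding BW_def
        by (cases "{x\<in>D i. W (r(i:=x)) = w} = {}") auto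
      then show "w \<in> (\<lambda>x. W (r(i:=x))) ` D i" by auto
    qed
    then show ?thesis using fin(2) finite_subset by blast
  qed
  have finP: "finite (PiE (I-{i}) D)" using fin by (simp add: finite_PiE)
  have "card L = card (\<phi> ` L)" using injp by (simp add: card_image)
  also have "\<dots> \<le> card (Sigma (PiE (I-{i}) D) (\<lambda>r. BW r \<times> VS))"
    by (rule card_mono) (use img finP finBW VS in auto)
  also have "\<dots> = (\<Sum>r\<in>PiE (I-{i}) D. card (BW r) * card VS)"
    using finP finBW VS by (simp add: card_cartesian_product)
  finally have "card L * c \<le> (\<Sum>r\<in>PiE (I-{i}) D. card (BW r) * card VS) * c" by simp
  also have "\<dots> = (\<Sum>r\<in>PiE (I-{i}) D. (card (BW r) * c) * card VS)"
    by (simp add: sum_distrib_left algebra_simps)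
  also have "\<dots> \<le> (\<Sum>r\<in>PiE (I-{i}) D. card (D i) * card VS)"
  proof (rule sum_mono)
    fix r show "card (BW r) * c * card VS \<le> card (D i) * card VS"
      using fiber_count[OF fin(2)[of i], of c "\<lambda>x. W (r(i:=x))"] by (simp add: BW_def)
  qed
  also have "\<dots> = card (PiE (I-{i}) D) * card (D i) * card VS" by simp
  also have "card (PiE (I-{i}) D) * card (D i) = card (PiE I D)"
    using fin iI by (simp add: card_PiE prod.remove mult.commute)
  finally show ?thesis by (simp add: mult.commute)
qed



lemma S_facts:
  assumes B: "bij_betw S {1..15::nat} {T. T \<subseteq> {1..4::nat} \<and> T \<noteq> {}}"
  shows "\<And>k. k \<in> {1..15} \<Longrightarrow> S k \<subseteq> {1..4}"
    and "\<exists>k4\<in>{1..15}. S k4 = {4}"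
    and "card {k\<in>{1..15::nat}. 2 \<in> S k \<and> 3 \<in> S k} \<le> 4"
proof -
  have sub: "S k \<subseteq> {1..4}" if "k \<in> {1..15}" for k
  proof -
    have "S k \<in> {T. T \<subseteq> {1..4::nat} \<and> T \<noteq> {}}" by (rule bij_betw_apply[OF B that])
    then show ?thesis by simp
  qed
  show "\<And>k. k \<in> {1..15} \<Longrightarrow> S k \<subseteq> {1..4}" by (rule sub)
  have "{4} \<in> {T. T \<subseteq> {1..4::nat} \<and> T \<noteq> {}}" by auto
  moreover have "S ` {1..15} = {T. T \<subseteq> {1..4::nat} \<and> T \<noteq> {}}" using B by (simp add: bij_betw_def)
  ultimately show "\<exists>k4\<in>{1..15}. S k4 = {4}" by (metis imageE)
  let ?K = "{k\<in>{1..15::nat}. 2 \<in> S k \<and> 3 \<in> S k}"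
  have inj: "inj_on S ?K"
    by (rule inj_on_subset[OF bij_betw_imp_inj_on[OF B]]) auto
  have "S ` ?K \<subseteq> (\<lambda>U. U \<union> {2,3}) ` Pow {1,4}"
  proof
    fix T assume "T \<in> S ` ?K"
    then obtain k where k: "k \<in> {1..15}" "2 \<in> S k" "3 \<in> S k" "T = S k" by auto
    have "S k \<subseteq> {1..4}" using sub k(1) by blast
    then have "T = (T \<inter> {1,4}) \<union> {2,3}" using k by auto
    then show "T \<in> (\<lambda>U. U \<union> {2,3}) ` Pow {1,4}" by blast
  qed
  then have "card (S ` ?K) \<le> card ((\<lambda>U. U \<union> {2,3}) ` Pow {1,4::nat})" by (intro card_mono) auto
  also have "\<dots> \<le> card (Pow {1,4::nat})" by (rule card_image_le) auto
  also have "\<dots> = 4" by (simp add: card_Pow)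
  finally show "card ?K \<le> 4" using card_image[OF inj] by simp
qed



lemma per_n:
  fixes S :: "nat \<Rightarrow> nat set" and R :: "nat \<Rightarrow> real"
  assumes B: "bij_betw S {1..15} {T. T \<subseteq> {1..4} \<and> T \<noteq> {}}"
    and V: "valid_code 4 15 S (\<lambda>k. 1)
           (\<lambda>j. if j = 1 then {4} else if j = 2 then {3,4} else if j = 3 then {1,2} else {2,3}) R n f g"
    and E: "err_prob 4 15 R n f g < 1/4"
  shows "real (nat \<lceil>2 powr (real n * R 1)\<rceil> * nat \<lceil>2 powr (real n * R 2)\<rceil> * nat \<lceil>2 powr (real n * R 3)\<rceil>)
          < 8 * 2 ^ (18 * n)"
proof -
  define N where "N j = nat \<lceil>2 powr (real n * R j)\<rceil>" for j
  define D where "D j = {1..N j}" for j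
  define M where "M = msg_tuples 4 R n"
  have Dlam: "D = (\<lambda>j. {1..nat \<lceil>2 powr (real n * R j)\<rceil>})" by (simp add: D_def N_def fun_eq_iff)
  have MD: "M = PiE {1..4} D" by (simp add: M_def msg_tuples_def Dlam)
  define q where "q = (2::nat) ^ n"
  have qpos: "q > 0" by (simp add: q_def)
  have finD: "finite (D j)" for j by (simp add: D_def)
  have finM: "finite M" by (simp add: MD finite_PiE finD)
  have Npos: "N j > 0" for j
  proof -
    have "2 powr (real n * R j) > 0" by simp
    then show ?thesis by (simp add: N_def)
  qed
  have cardM: "card M = N 1 * N 2 * N 3 * N 4"
  proof -
    have "{1..4::nat} = {1,2,3,4}" by auto
    then show ?thesis by (simp add: MD card_PiE D_def)
  qed
  have V1: "\<forall>k\<in>{1..15::nat}. \<forall>m\<in>M. f k m \<in> {1..2 ^ nat \<lfloor>real n * (\<lambda>k. 1::real) k\<rfloor>}"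
    using V unfolding valid_code_def M_def by (elim conjE) assumption
  have qq: "2 ^ nat \<lfloor>real n * (\<lambda>k. 1::real) k\<rfloor> = q" for k :: nat by (simp add: q_def)
  have rng: "f k m \<in> {1..q}" if "k \<in> {1..15}" "m \<in> M" for k m
    using V1 that unfolding qq by blast
  have V2: "\<forall>k\<in>{1..15}. \<forall>m\<in>M. \<forall>m'\<in>M. (\<forall>i\<in>S k. m i = m' i) \<longrightarrow> f k m = f k m'"
    using V unfolding valid_code_def M_def by (elim conjE) assumption
  have V3: "\<forall>j\<in>{1..4}. \<forall>L. \<forall>m\<in>M. \<forall>m'\<in>M.
        (\<forall>i\<in>(if j = 1 then {4} else if j = 2 then {3,4} else if j = 3 then {1,2} else {2,3}). m i = m' i) \<longrightarrow> g j L m = g j L m'"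
    using V unfolding valid_code_def M_def by (elim conjE) assumption
  have dep: "f k m = f k m'" if "k \<in> {1..15}" "m \<in> M" "m' \<in> M" "\<forall>i\<in>S k. m i = m' i" for k m m'
    using V2 that by blast
  have dec: "g j L m = g j L m'" if "j \<in> {1..4}" "m \<in> M" "m' \<in> M"
    "\<forall>i\<in>(if j = 1 then {4} else if j = 2 then {3,4} else if j = 3 then {1,2} else {2,3}). m i = m' i" for j L m m'
    using V3 that by blast
  have dec1: "g 1 L m = g 1 L m'" if "m \<in> M" "m' \<in> M" "m 4 = m' 4" for L m m'
    using dec[of 1 m m' L] that by simp
  have dec2: "g 2 L m = g 2 L m'" if "m \<in> M" "m' \<in> M" "m 3 = m' 3" "m 4 = m' 4" for L m m'
    using dec[of 2 m m' L] that by simp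
  have dec3: "g 3 L m = g 3 L m'" if "m \<in> M" "m' \<in> M" "m 1 = m' 1" "m 2 = m' 2" for L m m'
    using dec[of 3 m m' L] that by simp
  have Ssub: "S k \<subseteq> {1..4}" if "k \<in> {1..15}" for k using S_facts(1)[OF B that] .
  obtain k4 where k4: "k4 \<in> {1..15}" "S k4 = {4}" using S_facts(2)[OF B] by blast
  define K2 where "K2 = {k\<in>{1..15::nat}. 3 \<notin> S k}"
  define K23 where "K23 = {k\<in>{1..15::nat}. 2 \<in> S k \<and> 3 \<in> S k}"
  define K' where "K' = {1..15::nat} - {k4}"
  have cK23: "card K23 \<le> 4" using S_facts(3)[OF B] by (simp add: K23_def)
  have cK': "card K' = 14" using k4 by (simp add: K'_def)
  define W2 where "W2 m = restrict (\<lambda>k. f k m) K2" for m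
  define Vv where "Vv m = restrict (\<lambda>k. f k m) K23" for m
  define Y where "Y m = (m 4, restrict (\<lambda>k. f k m) K')" for m
  define G where "G = {m\<in>M. \<forall>j\<in>{1..4}. g j (sent 15 f m) m = m j}"
  have sentEq: "sent 15 f m = sent 15 f m'" if "\<forall>k\<in>{1..15}. f k m = f k m'" for m m'
    using that by (auto simp: sent_def)
  have W2dep: "W2 m = W2 m'" if mmW: "m \<in> M" "m' \<in> M" and "m 1 = m' 1" "m 2 = m' 2" "m 4 = m' 4" for m m'
  proof -
    have "f k m = f k m'" if k: "k \<in> K2" for k
    proof (rule dep)
      show "k \<in> {1..15}" using k by (simp add: K2_def)
      show "\<forall>i\<in>S k. m i = m' i"
      proof
        fix i assume i: "i \<in> S k"
        have "i \<in> {1..4}" "i \<noteq> 3" using i k Ssub[of k] by (auto simp: K2_def)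
        then have "i = 1 \<or> i = 2 \<or> i = 4" by auto
        then show "m i = m' i" using \<open>m 1 = m' 1\<close> \<open>m 2 = m' 2\<close> \<open>m 4 = m' 4\<close> by auto
      qed
    qed (use mmW in auto)
    then show ?thesis by (auto simp: W2_def)
  qed
  have allEq: "\<forall>k\<in>{1..15}. f k m = f k m'" if "m \<in> M" "m' \<in> M" "m 1 = m' 1" "m 3 = m' 3" "m 4 = m' 4"
     "W2 m = W2 m'" "Vv m = Vv m'" for m m'
  proof
    fix k assume k: "k \<in> {1..15::nat}"
    consider "3 \<notin> S k" | "2 \<in> S k" "3 \<in> S k" | "2 \<notin> S k" by blast
    then show "f k m = f k m'"
    proof cases
      case 1
      then have "k \<in> K2" using k by (simp add: K2_def)
      then show ?thesis using \<open>W2 m = W2 m'\<close> unfolding W2_def by (metis restrict_apply')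
    next
      case 2
      then have "k \<in> K23" using k by (simp add: K23_def)
      then show ?thesis using \<open>Vv m = Vv m'\<close> unfolding Vv_def by (metis restrict_apply')
    next
      case 3
      show ?thesis
      proof (rule dep[OF k that(1,2)])
        show "\<forall>i\<in>S k. m i = m' i"
        proof
          fix i assume i: "i \<in> S k"
          have "i \<in> {1..4}" "i \<noteq> 2" using i 3 Ssub[OF k] by auto
          then have "i = 1 \<or> i = 3 \<or> i = 4" by auto
          then show "m i = m' i" using that by auto
        qed
      qed
    qed
  qed
  have Yeq: "\<forall>k\<in>{1..15}. f k m = f k m'" if "m \<in> M" "m' \<in> M" "Y m = Y m'" for m m'
  proof
    fix k assume k: "k \<in> {1..15::nat}"
    have m4: "m 4 = m' 4" using that by (simp add: Y_def)
    show "f k m = f k m'"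
    proof (cases "k = k4")
      case True
      show ?thesis using dep[OF k that(1,2)] m4 True k4 by simp
    next
      case False
      then have "k \<in> K'" using k by (simp add: K'_def)
      then show ?thesis using that(3) unfolding Y_def by (metis prod.inject restrict_apply')
    qed
  qed
  have memM: "m i \<in> D i" if "m \<in> M" "i \<in> {1..4}" for m i using that by (auto simp: MD)
  have extM: "m = m'" if "m \<in> M" "m' \<in> M" "m 1 = m' 1" "m 2 = m' 2" "m 3 = m' 3" "m 4 = m' 4" for m m'
  proof (rule PiE_ext)
    show "m \<in> PiE {1..4} D" "m' \<in> PiE {1..4} D" using that by (auto simp: MD)
    fix i :: nat assume "i \<in> {1..4}"
    then have "i = 1 \<or> i = 2 \<or> i = 3 \<or> i = 4" by auto
    then show "m i = m' i" using that by auto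
  qed
  have good: "g j (sent 15 f m) m = m j" if "m \<in> G" "j \<in> {1..4}" for m j
    using that by (simp add: G_def)
  have GM: "G \<subseteq> M" by (auto simp: G_def)
  have errset: "{m \<in> M. \<exists>j\<in>{1..4}. g j (sent 15 f m) m \<noteq> m j} = M - G"
    by (auto simp: G_def)
  have cMpos: "card M > 0" using cardM Npos by simp
  have "real (card (M - G)) / real (card M) < 1/4"
    using E unfolding err_prob_def M_def[symmetric] errset .
  then have errb: "4 * real (card (M - G)) < real (card M)"
    using cMpos by (simp add: field_simps)
  have finG0: "finite G" using GM finM by (rule finite_subset)
  have cD: "card (M - G) = card M - card G" using card_Diff_subset[OF finG0 GM] .
  have cGM: "card G \<le> card M" using card_mono[OF finM GM] .
  have cGr: "real (card G) = real (card M) - real (card (M - G))" using cD cGM by simp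
  define c where "c = 4 * q ^ 4"
  define Fib where "Fib m = {x\<in>D 2. W2 (m(2:=x)) = W2 m}" for m
  define AL where "AL = {m\<in>G. c < card (Fib m)}"
  define AS where "AS = G - AL"
  have finG: "finite G" using GM finM finite_subset by blast
  define VS where "VS = PiE K23 (\<lambda>_. {1..q})"
  have finK23: "finite K23" by (simp add: K23_def)
  have cVS: "card VS \<le> q ^ 4"
  proof -
    have "card VS = q ^ card K23" by (simp add: VS_def card_PiE finK23)
    also have "\<dots> \<le> q ^ 4" using cK23 qpos by (simp add: power_increasing)
    finally show ?thesis .
  qed
  have AL_bound: "card AL * c \<le> card VS * card M"
    unfolding MD
  proof (rule large_count[where i=2 and W=W2 and V=Vv])
    show "finite {1..4::nat}" by simp
    show "finite (D j)" for j by (rule finD)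
    show "(2::nat) \<in> {1..4}" by simp
    show "finite VS" by (simp add: VS_def finK23 finite_PiE)
    show "Vv m \<in> VS" if "m \<in> AL" for m
      using that rng GM by (auto simp: VS_def Vv_def AL_def K23_def)
    show "AL \<subseteq> PiE {1..4} D" using GM by (auto simp: AL_def MD)
    show "m = m'" if "m \<in> AL" "m' \<in> AL" "\<forall>j\<in>{1..4}-{2}. m j = m' j" "W2 m = W2 m'" "Vv m = Vv m'" for m m'
    proof -
      have mm: "m \<in> G" "m' \<in> G" "m \<in> M" "m' \<in> M" using that GM by (auto simp: AL_def)
      have e: "m 1 = m' 1" "m 3 = m' 3" "m 4 = m' 4" using that(3) by auto
      have s: "sent 15 f m = sent 15 f m'" by (rule sentEq, rule allEq) (use mm e that in auto)
      have "m 2 = m' 2"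
        using good[OF mm(1), of 2] good[OF mm(2), of 2] dec2[OF mm(3,4) e(2,3), of "sent 15 f m'"] s by simp
      then show ?thesis using extM mm e by blast
    qed
    show "c < card {x\<in>D 2. W2 (m(2:=x)) = W2 m}" if "m \<in> AL" for m
      using that by (simp add: AL_def Fib_def)
  qed
  have AL4: "4 * card AL \<le> card M"
  proof -
    have "card AL * (4 * q^4) \<le> q^4 * card M"
      using le_trans[OF AL_bound[unfolded c_def] mult_le_mono1[OF cVS, of "card M"]] .
    then have "q^4 * (4 * card AL) \<le> q^4 * card M" by (simp add: algebra_simps)
    then show ?thesis using qpos by simp
  qed
  have AS_bound: "card AS \<le> c * card (Y ` AS)"
  proof (rule small_count[where p="\<lambda>m. m 2" and F=Fib])
    show "finite AS" using finG by (simp add: AS_def)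
    show "finite (Fib m) \<and> card (Fib m) \<le> c" if "m \<in> AS" for m
      using that finD by (auto simp: AS_def AL_def Fib_def)
    have m1eq: "m 1 = m' 1" if "m \<in> AS" "m' \<in> AS" "Y m = Y m'" for m m'
    proof -
      have mm: "m \<in> G" "m' \<in> G" "m \<in> M" "m' \<in> M" using that GM by (auto simp: AS_def)
      have s: "sent 15 f m = sent 15 f m'" by (rule sentEq, rule Yeq) (use mm that in auto)
      have "m 4 = m' 4" using that by (simp add: Y_def)
      then show ?thesis
        using good[OF mm(1), of 1] good[OF mm(2), of 1] dec1[OF mm(3,4), of "sent 15 f m'"] s by simp
    qed
    show "m' 2 \<in> Fib m" if "m \<in> AS" "m' \<in> AS" "Y m = Y m'" for m m'
    proof -
      have mm: "m \<in> G" "m' \<in> G" "m \<in> M" "m' \<in> M" using that GM by (auto simp: AS_def)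
      have d: "m' 2 \<in> D 2" using memM[OF mm(4)] by simp
      have upd: "m(2 := m' 2) \<in> M"
      proof -
        have "m(2 := m' 2) \<in> PiE (insert 2 {1..4}) D" by (rule PiE_fun_upd[where T=D, OF d]) (use mm in \<open>simp add: MD\<close>)
        then show ?thesis by (simp add: MD insert_absorb)
      qed
      have "W2 (m(2 := m' 2)) = W2 m'"
        by (rule W2dep[OF upd mm(4)]) (use m1eq[OF that] that in \<open>auto simp: Y_def\<close>)
      also have "W2 m' = W2 m"
        using Yeq[OF mm(3,4) that(3)] by (auto simp: W2_def K2_def)
      finally show ?thesis using d by (simp add: Fib_def)
    qed
    show "m = m'" if "m \<in> AS" "m' \<in> AS" "Y m = Y m'" "m 2 = m' 2" for m m'
    proof -
      have mm: "m \<in> G" "m' \<in> G" "m \<in> M" "m' \<in> M" using that GM by (auto simp: AS_def)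
      have s: "sent 15 f m = sent 15 f m'" by (rule sentEq, rule Yeq) (use mm that in auto)
      have e1: "m 1 = m' 1" by (rule m1eq[OF that(1-3)])
      have e4: "m 4 = m' 4" using that by (simp add: Y_def)
      have e3: "m 3 = m' 3"
        using good[OF mm(1), of 3] good[OF mm(2), of 3] dec3[OF mm(3,4) e1 that(4), of "sent 15 f m'"] s by simp
      show ?thesis by (rule extM) (use mm e1 e4 e3 that in auto)
    qed
  qed
  have YAS: "card (Y ` AS) \<le> N 4 * q ^ 14"
  proof -
    have "Y ` AS \<subseteq> D 4 \<times> PiE K' (\<lambda>_. {1..q})"
    proof
      fix z assume "z \<in> Y ` AS"
      then obtain m where m: "m \<in> AS" "z = Y m" by auto
      have mM: "m \<in> M" using m GM by (auto simp: AS_def)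
      show "z \<in> D 4 \<times> PiE K' (\<lambda>_. {1..q})"
        using m memM[OF mM, of 4] rng[OF _ mM] by (auto simp: Y_def K'_def)
    qed
    then have "card (Y ` AS) \<le> card (D 4 \<times> PiE K' (\<lambda>_. {1..q}))"
      by (intro card_mono) (auto simp: finD finite_PiE K'_def)
    also have "\<dots> = N 4 * q ^ 14"
      using cK' by (simp add: card_cartesian_product card_PiE K'_def D_def)
    finally show ?thesis .
  qed
  have cGsplit: "card G \<le> card AL + card AS"
  proof -
    have "G = AL \<union> AS" by (auto simp: AS_def AL_def)
    then show ?thesis using card_Un_le[of AL AS] by simp
  qed
  have main: "card G \<le> card AL + c * (N 4 * q ^ 14)"
    using cGsplit AS_bound mult_le_mono2[OF YAS, of c] by linarith
  have r1: "real (card G) \<le> real (card AL) + real c * (real (N 4) * real q ^ 14)"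
  proof -
    have "real (card G) \<le> real (card AL + c * (N 4 * q ^ 14))" using main by (simp only: of_nat_le_iff)
    then show ?thesis by simp
  qed
  have r2: "4 * real (card AL) \<le> real (card M)"
  proof -
    have "real (4 * card AL) \<le> real (card M)" using AL4 by (simp only: of_nat_le_iff)
    then show ?thesis by simp
  qed
  have rc: "real c * real q ^ 14 = 4 * 2 ^ (18 * n)"
    by (simp add: c_def q_def power_mult[symmetric] power_add[symmetric] mult.commute)
  have rc2: "real c * (real (N 4) * real q ^ 14) = 4 * 2 ^ (18 * n) * real (N 4)"
    using rc by (simp add: algebra_simps)
  have "real (card M) < 8 * 2 ^ (18 * n) * real (N 4)"
    using r1 r2 errb cGr rc2 by linarith
  then have "real (N 1 * N 2 * N 3) * real (N 4) < 8 * 2 ^ (18 * n) * real (N 4)"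
    using cardM by simp
  then have "real (N 1 * N 2 * N 3) < 8 * 2 ^ (18 * n)" using Npos[of 4] by simp
  then show ?thesis by (simp add: N_def)
qed



theorem mainTheorem5:
  fixes S :: "nat \<Rightarrow> nat set" and R :: "nat \<Rightarrow> real"
  assumes "bij_betw S {1..15} {T. T \<subseteq> {1..4} \<and> T \<noteq> {}}"
    and "achievable 4 15 S (\<lambda>k. 1)
           (\<lambda>j. if j = 1 then {4} else if j = 2 then {3,4} else if j = 3 then {1,2} else {2,3}) R"
  shows "R 1 + R 2 + R 3 \<le> 18"
proof -
  obtain f g where fg: "\<And>n. valid_code 4 15 S (\<lambda>k. 1)
           (\<lambda>j. if j = 1 then {4} else if j = 2 then {3,4} else if j = 3 then {1,2} else {2,3}) R n (f n) (g n)"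
    and lim: "(\<lambda>n. err_prob 4 15 R n (f n) (g n)) \<longlonglongrightarrow> 0"
    using assms(2) unfolding achievable_def by blast
  have "\<forall>\<^sub>F n in sequentially. err_prob 4 15 R n (f n) (g n) < 1/4"
    using order_tendstoD(2)[OF lim, of "1/4"] by simp
  then obtain n0 where n0: "\<And>n. n \<ge> n0 \<Longrightarrow> err_prob 4 15 R n (f n) (g n) < 1/4"
    by (auto simp: eventually_sequentially)
  define s where "s = R 1 + R 2 + R 3"
  have bnd: "real n * s < 18 * real n + 3" if "n \<ge> n0" for n
  proof -
    have P: "real (nat \<lceil>2 powr (real n * R 1)\<rceil> * nat \<lceil>2 powr (real n * R 2)\<rceil> * nat \<lceil>2 powr (real n * R 3)\<rceil>)
          < 8 * 2 ^ (18 * n)"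
      by (rule per_n[OF assms(1) fg n0[OF that]])
    have pos1: "- 1 < (2::real) powr x" for x using powr_gt_zero[of 2 x] by linarith
    have ge: "2 powr (real n * R j) \<le> real (nat \<lceil>2 powr (real n * R j)\<rceil>)" for j
      by linarith
    have "2 powr (real n * s) = 2 powr (real n * R 1) * 2 powr (real n * R 2) * 2 powr (real n * R 3)"
      by (simp add: s_def distrib_left powr_add)
    also have "\<dots> \<le> real (nat \<lceil>2 powr (real n * R 1)\<rceil>) * real (nat \<lceil>2 powr (real n * R 2)\<rceil>) * real (nat \<lceil>2 powr (real n * R 3)\<rceil>)"
      by (intro mult_mono ge mult_nonneg_nonneg) (auto simp del: of_nat_nat simp: pos1)
    also have "\<dots> < 8 * 2 ^ (18 * n)" using P by simp
    also have "(8::real) * 2 ^ (18 * n) = 2 powr (18 * real n + 3)"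
      by (simp add: powr_add powr_realpow[symmetric] mult.commute)
    finally show ?thesis by simp
  qed
  show ?thesis
  proof (rule ccontr)
    assume "\<not> ?thesis"
    then have sp: "s - 18 > 0" by (simp add: s_def)
    define n where "n = max n0 (nat \<lceil>3 / (s - 18)\<rceil> + 1)"
    have "real n > 3 / (s - 18)" unfolding n_def by linarith
    then have "real n * (s - 18) > 3" using sp by (simp add: field_simps)
    moreover have "real n * s < 18 * real n + 3" by (rule bnd) (simp add: n_def)
    ultimately show False by (simp add: algebra_simps)
  qed
qed

end
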